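(* Assume the following data: (A1) an associative unital $*$-algebra $\mathcal A$ over $\mathbb C$; (A2) an $\mathcal A$-bimodule $\Omega^1$; (A3) a $\mathbb C$-linear derivation $d:\mathcal A\to\Omega^1$; (A4) a map $\omega:\Omega^1\times\overline{\Omega^1}\to\mathbb C$, linear in both slots, with $\omega(\alpha,\overline\beta)=\overline{\omega(\beta,\overline\alpha)}$, $\omega(f\alpha g,\overline\beta)=\omega(\alpha,\overline{f^*\beta g^*})$ for $f,g\in\mathcal A$, and $\omega(\alpha,\overline\alpha)>0$ for $\alpha\neq0$; (A5) a linear functional $\eta:\mathcal A\to\mathbb C$ with $\eta(f^* )=-\overline{\eta(f)}$ and $\eta([f,g])=\frac{-1}{2\sqrt{-1}}\big(\omega(df,\overline{d(g^* )})-\omega(dg,\overline{d(f^* )})\big)$ for all $f,g$. Fix $n\ge1$. Let $M:=\mathrm{Mat}(n\times n,\Omega^1)$ (the affine space of connections $\phi\mapsto d\phi+\phi A$ on the free module $\mathcal A^n$ of row vectors) and $\mathfrak k:=\{u=(u_{ij})\in\mathrm{Mat}(n\times n,\mathcal A): u_{ij}^*=-u_{ji}\ \forall i,j\}$, a real Lie algebra under the commutator. For $u\in\mathfrak k$, $A\in M$ let $du:=(du_{ij})$, $[u,A]:=uA-Au$ (matrix products using the bimodule actions), and $X_u|_A:=du+[u,A]\in M$. Define on $M$ (viewed as a real vector space) $\omega_0(B,\overline C):=\sum_{i,j}\omega(B_{ij},\overline{C_{ij}})$, $\omega^{symp}(B,C):=\operatorname{Im}\omega_0(B,\overline C)$,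 and $$H_u(A):=\eta(\operatorname{Trace}u)-\omega^{symp}(A,du)+\tfrac12\,\omega^{symp}(A,[A,u]).$$ Then $u\mapsto H_u$ is a Lie algebra homomorphism lifting the action $u\mapsto X_u$; that is, for all $u,u_1,u_2\in\mathfrak k$ and $A,B\in M$: (i) $\frac{d}{dt}\big|_{t=0}H_u(A+tB)=\omega^{symp}(X_u|_A,B)$ (so $X_u$ is the Hamiltonian vector field of $H_u$ for the constant symplectic form $\omega^{symp}$), and (ii) $\omega^{symp}(X_{u_1}|_A,X_{u_2}|_A)=H_{[u_1,u_2]}(A)$, i.e. $H_{[u_1,u_2]}=\{H_{u_1},H_{u_2}\}$ for the Poisson bracket of $\omega^{symp}$.
   Context: $\overline{\Omega^1}$ denotes the complex-conjugate vector space of $\Omega^1$ (elements $\overline\beta$, $\overline{\lambda\beta}=\bar\lambda\overline\beta$). $\operatorname{Trace}u=\sum_i u_{ii}\in\mathcal A$. *)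

theory Defs
  imports "HOL-Analysis.Analysis"
begin

text \<open>The algebra has type 'a (an associative unital ring) with complex scalar
  multiplication sc and involution st; the bimodule Omega^1 has type 'b
  (an abelian group) with complex scalar multiplication sm, left action lm and
  right action rm.  The form w a b stands for omega(a, conj b): C-linear in
  the first slot, conjugate-linear in b (i.e. linear in conj b).\<close>

locale hamiltonian_data =
  fixes sc :: "complex \<Rightarrow> 'a::ring_1 \<Rightarrow> 'a"
    and st :: "'a \<Rightarrow> 'a"
    and lm :: "'a \<Rightarrow> 'b::ab_group_add \<Rightarrow> 'b"
    and rm :: "'b \<Rightarrow> 'a \<Rightarrow> 'b"
    and sm :: "complex \<Rightarrow> 'b \<Rightarrow> 'b"
    and d :: "'a \<Rightarrow> 'b"
    and w :: "'b \<Rightarrow> 'b \<Rightarrow> complex"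
    and eta :: "'a \<Rightarrow> complex"
  assumes
    sc_add_scalar: "\<And>a b f. sc (a + b) f = sc a f + sc b f"
    and sc_add: "\<And>a f g. sc a (f + g) = sc a f + sc a g"
    and sc_assoc: "\<And>a b f. sc a (sc b f) = sc (a * b) f"
    and sc_one: "\<And>f. sc 1 f = f"
    and sc_mult_left: "\<And>a f g. sc a (f * g) = sc a f * g"
    and sc_mult_right: "\<And>a f g. sc a (f * g) = f * sc a g"
    and st_st: "\<And>f. st (st f) = f"
    and st_add: "\<And>f g. st (f + g) = st f + st g"
    and st_mult: "\<And>f g. st (f * g) = st g * st f"
    and st_sc: "\<And>a f. st (sc a f) = sc (cnj a) (st f)"
    and st_one: "st 1 = 1"
    and sm_add_scalar: "\<And>a b x. sm (a + b) x = sm a x + sm b x"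
    and sm_add: "\<And>a x y. sm a (x + y) = sm a x + sm a y"
    and sm_assoc: "\<And>a b x. sm a (sm b x) = sm (a * b) x"
    and sm_one: "\<And>x. sm 1 x = x"
    and lm_mult: "\<And>f g x. lm (f * g) x = lm f (lm g x)"
    and lm_one: "\<And>x. lm 1 x = x"
    and lm_add_left: "\<And>f g x. lm (f + g) x = lm f x + lm g x"
    and lm_add_right: "\<And>f x y. lm f (x + y) = lm f x + lm f y"
    and rm_mult: "\<And>f g x. rm x (f * g) = rm (rm x f) g"
    and rm_one: "\<And>x. rm x 1 = x"
    and rm_add_left: "\<And>x y f. rm (x + y) f = rm x f + rm y f"
    and rm_add_right: "\<And>x f g. rm x (f + g) = rm x f + rm x g"
    and lm_rm: "\<And>f x g. rm (lm f x) g = lm f (rm x g)"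
    and lm_sc: "\<And>a f x. lm (sc a f) x = sm a (lm f x)"
    and lm_sm: "\<And>a f x. lm f (sm a x) = sm a (lm f x)"
    and rm_sc: "\<And>a f x. rm x (sc a f) = sm a (rm x f)"
    and rm_sm: "\<And>a f x. rm (sm a x) f = sm a (rm x f)"
    and d_add: "\<And>f g. d (f + g) = d f + d g"
    and d_sc: "\<And>a f. d (sc a f) = sm a (d f)"
    and d_leibniz: "\<And>f g. d (f * g) = rm (d f) g + lm f (d g)"
    and w_add_left: "\<And>x y z. w (x + y) z = w x z + w y z"
    and w_sm_left: "\<And>a x z. w (sm a x) z = a * w x z"
    and w_add_right: "\<And>x y z. w x (y + z) = w x y + w x z"
    and w_sm_right: "\<And>a x y. w x (sm a y) = cnj a * w x y"
    and w_herm: "\<And>x y. w x y = cnj (w y x)"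
    and w_bimod: "\<And>f g x y. w (rm (lm f x) g) y = w x (rm (lm (st f) y) (st g))"
    and w_pos: "\<And>x. x \<noteq> 0 \<Longrightarrow> Im (w x x) = 0 \<and> Re (w x x) > 0"
    and eta_add: "\<And>f g. eta (f + g) = eta f + eta g"
    and eta_sc: "\<And>a f. eta (sc a f) = a * eta f"
    and eta_st: "\<And>f. eta (st f) = - cnj (eta f)"
    and eta_comm: "\<And>f g. eta (f * g - g * f) =
        (-1 / (2 * \<i>)) * (w (d f) (d (st g)) - w (d g) (d (st f)))"

text \<open>n x n matrices are functions on nat x nat, only entries with indices < n matter.\<close>

definition in_k :: "('a \<Rightarrow> 'a) \<Rightarrow> nat \<Rightarrow> (nat \<Rightarrow> nat \<Rightarrow> 'a::ring_1) \<Rightarrow> bool" where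
  "in_k st n u \<longleftrightarrow> (\<forall>i<n. \<forall>j<n. st (u i j) = - u j i)"

definition mat_comm :: "nat \<Rightarrow> (nat \<Rightarrow> nat \<Rightarrow> 'a::ring_1) \<Rightarrow> (nat \<Rightarrow> nat \<Rightarrow> 'a) \<Rightarrow> nat \<Rightarrow> nat \<Rightarrow> 'a" where
  "mat_comm n u v = (\<lambda>i j. (\<Sum>k<n. u i k * v k j) - (\<Sum>k<n. v i k * u k j))"

definition act_comm :: "('a \<Rightarrow> 'b \<Rightarrow> 'b) \<Rightarrow> ('b \<Rightarrow> 'a \<Rightarrow> 'b) \<Rightarrow> nat \<Rightarrow>
    (nat \<Rightarrow> nat \<Rightarrow> 'a) \<Rightarrow> (nat \<Rightarrow> nat \<Rightarrow> 'b::ab_group_add) \<Rightarrow> nat \<Rightarrow> nat \<Rightarrow> 'b" where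
  "act_comm lm rm n u A = (\<lambda>i j. (\<Sum>k<n. lm (u i k) (A k j)) - (\<Sum>k<n. rm (A i k) (u k j)))"

definition mat_d :: "('a \<Rightarrow> 'b) \<Rightarrow> (nat \<Rightarrow> nat \<Rightarrow> 'a) \<Rightarrow> nat \<Rightarrow> nat \<Rightarrow> 'b" where
  "mat_d d u = (\<lambda>i j. d (u i j))"

definition Xvec :: "('a \<Rightarrow> 'b) \<Rightarrow> ('a \<Rightarrow> 'b \<Rightarrow> 'b) \<Rightarrow> ('b \<Rightarrow> 'a \<Rightarrow> 'b) \<Rightarrow> nat \<Rightarrow>
    (nat \<Rightarrow> nat \<Rightarrow> 'a) \<Rightarrow> (nat \<Rightarrow> nat \<Rightarrow> 'b::ab_group_add) \<Rightarrow> nat \<Rightarrow> nat \<Rightarrow> 'b" where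
  "Xvec d lm rm n u A = (\<lambda>i j. mat_d d u i j + act_comm lm rm n u A i j)"

definition omega0 :: "('b \<Rightarrow> 'b \<Rightarrow> complex) \<Rightarrow> nat \<Rightarrow> (nat \<Rightarrow> nat \<Rightarrow> 'b) \<Rightarrow> (nat \<Rightarrow> nat \<Rightarrow> 'b) \<Rightarrow> complex" where
  "omega0 w n B C = (\<Sum>i<n. \<Sum>j<n. w (B i j) (C i j))"

definition omega_symp :: "('b \<Rightarrow> 'b \<Rightarrow> complex) \<Rightarrow> nat \<Rightarrow> (nat \<Rightarrow> nat \<Rightarrow> 'b) \<Rightarrow> (nat \<Rightarrow> nat \<Rightarrow> 'b) \<Rightarrow> real" where
  "omega_symp w n B C = Im (omega0 w n B C)"

definition mat_trace :: "nat \<Rightarrow> (nat \<Rightarrow> nat \<Rightarrow> 'a::comm_monoid_add) \<Rightarrow> 'a" where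
  "mat_trace n u = (\<Sum>i<n. u i i)"

text \<open>H_u(A) = eta(Tr u) - omega_symp(A, du) + 1/2 omega_symp(A, [A,u]), where [A,u] = -[u,A].\<close>
definition Ham :: "('a \<Rightarrow> 'b) \<Rightarrow> ('a \<Rightarrow> 'b \<Rightarrow> 'b) \<Rightarrow> ('b \<Rightarrow> 'a \<Rightarrow> 'b) \<Rightarrow>
    ('b \<Rightarrow> 'b \<Rightarrow> complex) \<Rightarrow> ('a \<Rightarrow> complex) \<Rightarrow> nat \<Rightarrow>
    (nat \<Rightarrow> nat \<Rightarrow> 'a::ring_1) \<Rightarrow> (nat \<Rightarrow> nat \<Rightarrow> 'b::ab_group_add) \<Rightarrow> complex" where
  "Ham d lm rm w eta n u A =
     eta (mat_trace n u)
     - complex_of_real (omega_symp w n A (mat_d d u))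
     + complex_of_real (1/2 * omega_symp w n A (\<lambda>i j. - act_comm lm rm n u A i j))"

end

theory Submission
  imports Defs "HOL-Library.Function_Algebras"
begin

definition LM :: "('a \<Rightarrow> 'b \<Rightarrow> 'b) \<Rightarrow> nat \<Rightarrow> (nat \<Rightarrow> nat \<Rightarrow> 'a) \<Rightarrow> (nat \<Rightarrow> nat \<Rightarrow> 'b::comm_monoid_add) \<Rightarrow> nat \<Rightarrow> nat \<Rightarrow> 'b"
  where "LM lm n u X = (\<lambda>i j. \<Sum>k<n. lm (u i k) (X k j))"
definition RM :: "('b \<Rightarrow> 'a \<Rightarrow> 'b) \<Rightarrow> nat \<Rightarrow> (nat \<Rightarrow> nat \<Rightarrow> 'b::comm_monoid_add) \<Rightarrow> (nat \<Rightarrow> nat \<Rightarrow> 'a) \<Rightarrow> nat \<Rightarrow> nat \<Rightarrow> 'b"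
  where "RM rm n X u = (\<lambda>i j. \<Sum>k<n. rm (X i k) (u k j))"
definition MM :: "nat \<Rightarrow> (nat \<Rightarrow> nat \<Rightarrow> 'a::ring_1) \<Rightarrow> (nat \<Rightarrow> nat \<Rightarrow> 'a) \<Rightarrow> nat \<Rightarrow> nat \<Rightarrow> 'a"
  where "MM n u v = (\<lambda>i j. \<Sum>k<n. u i k * v k j)"
definition SM :: "(complex \<Rightarrow> 'b \<Rightarrow> 'b) \<Rightarrow> complex \<Rightarrow> (nat \<Rightarrow> nat \<Rightarrow> 'b) \<Rightarrow> nat \<Rightarrow> nat \<Rightarrow> 'b"
  where "SM sm a X = (\<lambda>i j. sm a (X i j))"

lemma act_comm_eq: "act_comm lm rm n u A = LM lm n u A - RM rm n A u"
  by (simp add: act_comm_def LM_def RM_def fun_eq_iff)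
lemma mat_comm_eq: "mat_comm n u v = MM n u v - MM n v u"
  by (simp add: mat_comm_def MM_def fun_eq_iff)
lemma Xvec_eq: "Xvec d lm rm n u A = mat_d d u + act_comm lm rm n u A"
  by (simp add: Xvec_def fun_eq_iff)

context hamiltonian_data
begin

lemma add_lmr: "Modules.additive (lm f)" by unfold_locales (rule lm_add_right)
lemma add_lml: "Modules.additive (\<lambda>f. lm f x)" by unfold_locales (rule lm_add_left)
lemma add_rmr: "Modules.additive (rm x)" by unfold_locales (rule rm_add_right)
lemma add_rml: "Modules.additive (\<lambda>x. rm x f)" by unfold_locales (rule rm_add_left)
lemma add_wl: "Modules.additive (\<lambda>x. w x y)" by unfold_locales (rule w_add_left)
lemma add_wr: "Modules.additive (w x)" by unfold_locales (rule w_add_right)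
lemma add_d: "Modules.additive d" by unfold_locales (rule d_add)
lemma add_eta: "Modules.additive eta" by unfold_locales (rule eta_add)
lemma add_sm: "Modules.additive (sm a)" by unfold_locales (rule sm_add)

lemmas lin_simps =
  Modules.additive.zero[OF add_lmr] Modules.additive.minus[OF add_lmr] Modules.additive.diff[OF add_lmr] Modules.additive.sum[OF add_lmr]
  Modules.additive.zero[OF add_lml] Modules.additive.minus[OF add_lml] Modules.additive.diff[OF add_lml] Modules.additive.sum[OF add_lml]
  Modules.additive.zero[OF add_rmr] Modules.additive.minus[OF add_rmr] Modules.additive.diff[OF add_rmr] Modules.additive.sum[OF add_rmr]
  Modules.additive.zero[OF add_rml] Modules.additive.minus[OF add_rml] Modules.additive.diff[OF add_rml] Modules.additive.sum[OF add_rml]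
  Modules.additive.zero[OF add_wl] Modules.additive.minus[OF add_wl] Modules.additive.diff[OF add_wl] Modules.additive.sum[OF add_wl]
  Modules.additive.zero[OF add_wr] Modules.additive.minus[OF add_wr] Modules.additive.diff[OF add_wr] Modules.additive.sum[OF add_wr]
  Modules.additive.zero[OF add_d] Modules.additive.minus[OF add_d] Modules.additive.diff[OF add_d] Modules.additive.sum[OF add_d]
  Modules.additive.zero[OF add_eta] Modules.additive.minus[OF add_eta] Modules.additive.diff[OF add_eta] Modules.additive.sum[OF add_eta]
  Modules.additive.zero[OF add_sm] Modules.additive.minus[OF add_sm] Modules.additive.diff[OF add_sm] Modules.additive.sum[OF add_sm]
  lm_add_right lm_add_left rm_add_left rm_add_right w_add_left w_add_right d_add eta_add sm_add

lemma w_lm: "w (lm f x) y = w x (lm (st f) y)"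
  using w_bimod[of f x 1 y] by (simp add: rm_one st_one)
lemma w_rm: "w (rm x g) y = w x (rm y (st g))"
  using w_bimod[of 1 x g y] by (simp add: lm_one st_one)

lemma LM_assoc: "LM lm n u (LM lm n v X) = LM lm n (MM n u v) X"
  apply (simp add: LM_def MM_def fun_eq_iff lin_simps lm_mult)
  by (intro allI sum.swap)
lemma RM_assoc: "RM rm n (RM rm n X u) v = RM rm n X (MM n u v)"
  apply (simp add: RM_def MM_def fun_eq_iff lin_simps rm_mult)
  by (intro allI sum.swap)
lemma LM_RM: "LM lm n u (RM rm n X v) = RM rm n (LM lm n u X) v"
  apply (simp add: RM_def LM_def fun_eq_iff lin_simps lm_rm)
  by (intro allI sum.swap)

lemma LM_addl: "LM lm n (u + v) X = LM lm n u X + LM lm n v X"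
  by (simp add: LM_def fun_eq_iff lin_simps sum.distrib)
lemma LM_diffl: "LM lm n (u - v) X = LM lm n u X - LM lm n v X"
  by (simp add: LM_def fun_eq_iff lin_simps sum_subtractf)
lemma LM_addr: "LM lm n u (X + Y) = LM lm n u X + LM lm n u Y"
  by (simp add: LM_def fun_eq_iff lin_simps sum.distrib)
lemma LM_diffr: "LM lm n u (X - Y) = LM lm n u X - LM lm n u Y"
  by (simp add: LM_def fun_eq_iff lin_simps sum_subtractf)
lemma RM_addl: "RM rm n (X + Y) u = RM rm n X u + RM rm n Y u"
  by (simp add: RM_def fun_eq_iff lin_simps sum.distrib)
lemma RM_diffl: "RM rm n (X - Y) u = RM rm n X u - RM rm n Y u"
  by (simp add: RM_def fun_eq_iff lin_simps sum_subtractf)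
lemma RM_addr: "RM rm n X (u + v) = RM rm n X u + RM rm n X v"
  by (simp add: RM_def fun_eq_iff lin_simps sum.distrib)
lemma RM_diffr: "RM rm n X (u - v) = RM rm n X u - RM rm n X v"
  by (simp add: RM_def fun_eq_iff lin_simps sum_subtractf)
lemma LM_sm: "LM lm n u (SM sm a X) = SM sm a (LM lm n u X)"
  by (simp add: LM_def SM_def fun_eq_iff lin_simps lm_sm)
lemma RM_sm: "RM rm n (SM sm a X) u = SM sm a (RM rm n X u)"
  by (simp add: RM_def SM_def fun_eq_iff lin_simps rm_sm)

lemma jacobi: "act_comm lm rm n (mat_comm n u1 u2) A =
   act_comm lm rm n u1 (act_comm lm rm n u2 A) - act_comm lm rm n u2 (act_comm lm rm n u1 A)"
  by (simp add: act_comm_eq mat_comm_eq LM_diffl LM_diffr RM_diffl RM_diffr LM_assoc RM_assoc LM_RM algebra_simps)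


lemma sum3_swap: "(\<Sum>i\<in>A. \<Sum>j\<in>B. \<Sum>k\<in>C. F i j k) = (\<Sum>k\<in>C. \<Sum>j\<in>B. \<Sum>i\<in>A. F i j k)"
proof -
  have "(\<Sum>i\<in>A. \<Sum>j\<in>B. \<Sum>k\<in>C. F i j k) = (\<Sum>i\<in>A. \<Sum>k\<in>C. \<Sum>j\<in>B. F i j k)"
    by (intro sum.cong refl sum.swap)
  also have "\<dots> = (\<Sum>k\<in>C. \<Sum>i\<in>A. \<Sum>j\<in>B. F i j k)" by (rule sum.swap)
  also have "\<dots> = (\<Sum>k\<in>C. \<Sum>j\<in>B. \<Sum>i\<in>A. F i j k)"
    by (intro sum.cong refl sum.swap)
  finally show ?thesis .
qed

lemma O0_addl: "omega0 w n (X + Y) Z = omega0 w n X Z + omega0 w n Y Z"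
  by (simp add: omega0_def lin_simps sum.distrib)
lemma O0_diffl: "omega0 w n (X - Y) Z = omega0 w n X Z - omega0 w n Y Z"
  by (simp add: omega0_def lin_simps sum_subtractf)
lemma O0_minusl: "omega0 w n (- X) Z = - omega0 w n X Z"
  by (simp add: omega0_def lin_simps sum_negf)
lemma O0_addr: "omega0 w n Z (X + Y) = omega0 w n Z X + omega0 w n Z Y"
  by (simp add: omega0_def lin_simps sum.distrib)
lemma O0_diffr: "omega0 w n Z (X - Y) = omega0 w n Z X - omega0 w n Z Y"
  by (simp add: omega0_def lin_simps sum_subtractf)
lemma O0_minusr: "omega0 w n Z (- X) = - omega0 w n Z X"
  by (simp add: omega0_def lin_simps sum_negf)
lemma O0_sml: "omega0 w n (SM sm a X) Y = a * omega0 w n X Y"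
  by (simp add: omega0_def SM_def w_sm_left sum_distrib_left)
lemma O0_smr: "omega0 w n X (SM sm a Y) = cnj a * omega0 w n X Y"
  by (simp add: omega0_def SM_def w_sm_right sum_distrib_left)
lemma O0_herm: "omega0 w n X Y = cnj (omega0 w n Y X)"
  unfolding omega0_def cnj_sum by (intro sum.cong refl) (rule w_herm)

lemma O0_LM:
  assumes "in_k st n u"
  shows "omega0 w n (LM lm n u X) Y = - omega0 w n X (LM lm n u Y)"
proof -
  have "omega0 w n (LM lm n u X) Y = (\<Sum>i<n. \<Sum>j<n. \<Sum>k<n. - w (X k j) (lm (u k i) (Y i j)))"
    unfolding omega0_def LM_def using assms
    by (intro sum.cong refl) (auto simp: lin_simps w_lm in_k_def intro!: sum.cong)
  also have "\<dots> = (\<Sum>k<n. \<Sum>j<n. \<Sum>i<n. - w (X k j) (lm (u k i) (Y i j)))"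
    by (rule sum3_swap)
  also have "\<dots> = - omega0 w n X (LM lm n u Y)"
    by (simp add: omega0_def LM_def lin_simps sum_negf)
  finally show ?thesis .
qed

lemma O0_RM:
  assumes "in_k st n u"
  shows "omega0 w n (RM rm n X u) Y = - omega0 w n X (RM rm n Y u)"
proof -
  have "omega0 w n (RM rm n X u) Y = (\<Sum>i<n. \<Sum>j<n. \<Sum>k<n. - w (X i k) (rm (Y i j) (u j k)))"
    unfolding omega0_def RM_def using assms
    by (intro sum.cong refl) (auto simp: lin_simps w_rm in_k_def intro!: sum.cong)
  also have "\<dots> = (\<Sum>i<n. \<Sum>k<n. \<Sum>j<n. - w (X i k) (rm (Y i j) (u j k)))"
    by (intro sum.cong refl sum.swap)
  also have "\<dots> = - omega0 w n X (RM rm n Y u)"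
    by (simp add: omega0_def RM_def lin_simps sum_negf)
  finally show ?thesis .
qed

lemma O0_C:
  assumes "in_k st n u"
  shows "omega0 w n (act_comm lm rm n u X) Y = - omega0 w n X (act_comm lm rm n u Y)"
  by (simp add: act_comm_eq O0_diffl O0_diffr O0_LM[OF assms] O0_RM[OF assms])

abbreviation S where "S n X Y \<equiv> omega_symp w n X Y"

lemma S_addl: "S n (X + Y) Z = S n X Z + S n Y Z" by (simp add: omega_symp_def O0_addl)
lemma S_diffl: "S n (X - Y) Z = S n X Z - S n Y Z" by (simp add: omega_symp_def O0_diffl)
lemma S_minusl: "S n (- X) Z = - S n X Z" by (simp add: omega_symp_def O0_minusl)
lemma S_addr: "S n Z (X + Y) = S n Z X + S n Z Y" by (simp add: omega_symp_def O0_addr)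
lemma S_diffr: "S n Z (X - Y) = S n Z X - S n Z Y" by (simp add: omega_symp_def O0_diffr)
lemma S_minusr: "S n Z (- X) = - S n Z X" by (simp add: omega_symp_def O0_minusr)
lemma S_sml: "S n (SM sm (of_real t) X) Y = t * S n X Y" by (simp add: omega_symp_def O0_sml)
lemma S_smr: "S n X (SM sm (of_real t) Y) = t * S n X Y" by (simp add: omega_symp_def O0_smr)
lemma S_minusr': "S n Z (\<lambda>i j. - X i j) = - S n Z X"
  by (simp add: omega_symp_def omega0_def lin_simps sum_negf)
lemma S_anti: "S n X Y = - S n Y X"
  unfolding omega_symp_def by (subst O0_herm) simp
lemma S_C: "in_k st n u \<Longrightarrow> S n X (act_comm lm rm n u Y) = - S n (act_comm lm rm n u X) Y"
  unfolding omega_symp_def by (simp add: O0_C)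

lemma D_diff: "mat_d d (u - v) = mat_d d u - mat_d d v"
  by (simp add: mat_d_def fun_eq_iff lin_simps)
lemma D_MM: "mat_d d (MM n u v) = RM rm n (mat_d d u) v + LM lm n u (mat_d d v)"
  by (simp add: mat_d_def MM_def LM_def RM_def fun_eq_iff lin_simps d_leibniz sum.distrib)
lemma D_comm: "mat_d d (mat_comm n u1 u2) = act_comm lm rm n u1 (mat_d d u2) - act_comm lm rm n u2 (mat_d d u1)"
  by (simp add: mat_comm_eq D_diff D_MM act_comm_eq algebra_simps)

lemma eta_trace:
  assumes u1: "in_k st n u1" and u2: "in_k st n u2"
  shows "eta (mat_trace n (mat_comm n u1 u2)) = of_real (S n (mat_d d u1) (mat_d d u2))"
proof -
  let ?z = "omega0 w n (mat_d d u1) (mat_d d u2)"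
  have "mat_trace n (mat_comm n u1 u2) = (\<Sum>i<n. \<Sum>k<n. u1 i k * u2 k i - u2 k i * u1 i k)"
    by (simp add: mat_trace_def mat_comm_def sum_subtractf) (rule sum.swap)
  then have "eta (mat_trace n (mat_comm n u1 u2))
     = (\<Sum>i<n. \<Sum>k<n. (-1 / (2 * \<i>)) * (w (d (u1 i k)) (d (st (u2 k i))) - w (d (u2 k i)) (d (st (u1 i k)))))"
    by (simp only: Modules.additive.sum[OF add_eta] eta_comm)
  also have "\<dots> = (\<Sum>i<n. \<Sum>k<n. (-1 / (2 * \<i>)) * (w (d (u2 k i)) (d (u1 k i)) - w (d (u1 i k)) (d (u2 i k))))"
    using u1 u2 by (intro sum.cong refl) (auto simp: in_k_def lin_simps algebra_simps)
  also have "\<dots> = (-1 / (2 * \<i>)) * ((\<Sum>i<n. \<Sum>k<n. w (d (u2 k i)) (d (u1 k i))) - ?z)"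
    by (simp only: omega0_def mat_d_def sum_subtractf[symmetric] sum_distrib_left)
  also have "(\<Sum>i<n. \<Sum>k<n. w (d (u2 k i)) (d (u1 k i))) = omega0 w n (mat_d d u2) (mat_d d u1)"
    by (simp add: omega0_def mat_d_def) (rule sum.swap)
  also have "\<dots> = cnj ?z" by (rule O0_herm)
  also have "(-1 / (2 * \<i>)) * (cnj ?z - ?z) = of_real (Im ?z)"
  proof -
    have "cnj ?z - ?z = - (of_real (2 * Im ?z) * \<i>)" using complex_diff_cnj[of ?z] by (metis minus_diff_eq of_real_mult)
    then show ?thesis by (simp add: field_simps)
  qed
  finally show ?thesis by (simp add: omega_symp_def)
qed

lemma part2:
  assumes u1: "in_k st n u1" and u2: "in_k st n u2"
  shows "complex_of_real (S n (Xvec d lm rm n u1 A) (Xvec d lm rm n u2 A))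
     = Ham d lm rm w eta n (mat_comm n u1 u2) A"
proof -
  define a1 where "a1 = mat_d d u1"
  define a2 where "a2 = mat_d d u2"
  define c1 where "c1 = act_comm lm rm n u1 A"
  define c2 where "c2 = act_comm lm rm n u2 A"
  have neg: "(\<lambda>i j. - act_comm lm rm n (mat_comm n u1 u2) A i j) = - act_comm lm rm n (mat_comm n u1 u2) A"
    by (simp add: fun_eq_iff)
  have L: "S n (Xvec d lm rm n u1 A) (Xvec d lm rm n u2 A) = S n a1 a2 + S n a1 c2 + S n c1 a2 + S n c1 c2"
    by (simp add: Xvec_eq S_addl S_addr a1_def a2_def c1_def c2_def)
  have h1: "S n A (mat_d d (mat_comm n u1 u2)) = - S n c1 a2 - S n a1 c2"
  proof -
    have "S n A (mat_d d (mat_comm n u1 u2)) = S n A (act_comm lm rm n u1 a2) - S n A (act_comm lm rm n u2 a1)"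
      by (simp add: D_comm S_diffr a1_def a2_def)
    also have "\<dots> = - S n c1 a2 + S n c2 a1"
      by (simp add: S_C[OF u1] S_C[OF u2] c1_def c2_def)
    also have "S n c2 a1 = - S n a1 c2" by (rule S_anti)
    finally show ?thesis by simp
  qed
  have h2: "S n A (\<lambda>i j. - act_comm lm rm n (mat_comm n u1 u2) A i j) = 2 * S n c1 c2"
  proof -
    have "S n A (\<lambda>i j. - act_comm lm rm n (mat_comm n u1 u2) A i j) = - S n A (act_comm lm rm n u1 c2) + S n A (act_comm lm rm n u2 c1)"
      by (simp only: S_minusr' jacobi S_diffr c1_def c2_def)
    also have "\<dots> = S n c1 c2 - S n c2 c1"
      by (simp add: S_C[OF u1] S_C[OF u2] c1_def c2_def)
    also have "S n c2 c1 = - S n c1 c2" by (rule S_anti)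
    finally show ?thesis by simp
  qed
  have "Ham d lm rm w eta n (mat_comm n u1 u2) A
     = of_real (S n a1 a2) - of_real (- S n c1 a2 - S n a1 c2) + of_real (1/2 * (2 * S n c1 c2))"
    unfolding Ham_def eta_trace[OF u1 u2] h1 h2 a1_def a2_def by simp
  also have "\<dots> = of_real (S n a1 a2 + S n a1 c2 + S n c1 a2 + S n c1 c2)"
    by simp
  finally show ?thesis using L by simp
qed

lemma part1:
  assumes u: "in_k st n u"
  shows "((\<lambda>t::real. Ham d lm rm w eta n u (\<lambda>i j. A i j + sm (complex_of_real t) (B i j)))
              has_vector_derivative
              complex_of_real (S n (Xvec d lm rm n u A) B)) (at 0)"
proof -
  define a where "a = mat_d d u"
  define cA where "cA = act_comm lm rm n u A"
  define cB where "cB = act_comm lm rm n u B"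
  define K where "K = eta (mat_trace n u)"
  define p where "p = (\<lambda>t::real. - (S n A a + t * S n B a)
        + 1/2 * (- (S n A cA + t * S n A cB + t * S n B cA + t * (t * S n B cB))))"
  have Z: "\<And>t. (\<lambda>i j. A i j + sm (complex_of_real t) (B i j)) = A + SM sm (of_real t) B"
    by (simp add: SM_def fun_eq_iff)
  have CZ: "\<And>t. act_comm lm rm n u (A + SM sm (of_real t) B) = cA + SM sm (of_real t) cB"
    unfolding act_comm_eq LM_addr RM_addl LM_sm RM_sm
    by (simp add: SM_def fun_eq_iff lin_simps cA_def cB_def act_comm_eq)
  have negf: "\<And>X. (\<lambda>i j. - X i j) = - X" by (simp add: fun_eq_iff)
  have eq: "\<And>t. Ham d lm rm w eta n u (\<lambda>i j. A i j + sm (complex_of_real t) (B i j)) = K + of_real (p t)"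
    unfolding Ham_def Z S_minusr' CZ S_addl S_addr S_sml S_smr
    by (simp add: p_def K_def a_def algebra_simps)
  have dp: "(p has_field_derivative (- S n B a - 1/2 * (S n A cB + S n B cA))) (at 0)"
    unfolding p_def
    apply (auto intro!: derivative_eq_intros)
    apply (simp add: field_simps)
    done
  have val: "- S n B a - 1/2 * (S n A cB + S n B cA) = S n (Xvec d lm rm n u A) B"
  proof -
    have "S n A cB = - S n cA B" unfolding cA_def cB_def by (rule S_C[OF u])
    moreover have "S n B cA = - S n cA B" by (rule S_anti)
    moreover have "S n B a = - S n a B" by (rule S_anti)
    ultimately show ?thesis by (simp add: Xvec_eq S_addl a_def cA_def)
  qed
  have "((\<lambda>t. K + of_real (p t)) has_vector_derivative (0 + of_real (- S n B a - 1/2 * (S n A cB + S n B cA)))) (at 0)"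
    by (intro derivative_intros has_vector_derivative_of_real dp)
  then show ?thesis unfolding eq val by simp
qed
end
theorem mainTheorem2:
  fixes sc :: "complex \<Rightarrow> 'a::ring_1 \<Rightarrow> 'a"
    and st :: "'a \<Rightarrow> 'a"
    and lm :: "'a \<Rightarrow> 'b::ab_group_add \<Rightarrow> 'b"
    and rm :: "'b \<Rightarrow> 'a \<Rightarrow> 'b"
    and sm :: "complex \<Rightarrow> 'b \<Rightarrow> 'b"
    and d :: "'a \<Rightarrow> 'b"
    and w :: "'b \<Rightarrow> 'b \<Rightarrow> complex"
    and eta :: "'a \<Rightarrow> complex"
    and n :: nat
  assumes data: "hamiltonian_data sc st lm rm sm d w eta"
    and n: "n \<ge> 1"
  shows "(\<forall>u A B. in_k st n u \<longrightarrow>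
           ((\<lambda>t::real. Ham d lm rm w eta n u (\<lambda>i j. A i j + sm (complex_of_real t) (B i j)))
              has_vector_derivative
              complex_of_real (omega_symp w n (Xvec d lm rm n u A) B)) (at 0))
       \<and> (\<forall>u1 u2 A. in_k st n u1 \<longrightarrow> in_k st n u2 \<longrightarrow>
           complex_of_real (omega_symp w n (Xvec d lm rm n u1 A) (Xvec d lm rm n u2 A))
             = Ham d lm rm w eta n (mat_comm n u1 u2) A)"
  using hamiltonian_data.part1[OF data] hamiltonian_data.part2[OF data] by blast

end
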